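(* Let $G$ be a group of order $16p$, where $p$ is an odd prime, let $P$ be a Sylow $p$-subgroup of $G$ and assume $P \trianglelefteq G$, and let $Q$ be a Sylow $2$-subgroup of $G$. Then $G = Q \ltimes P$. Moreover, if the commutator subgroup $G'$ is not a cyclic group of prime-power order (the trivial group counting as having prime-power order), then: $Q$ is nonabelian, $Q$ acts nontrivially on $P$ by conjugation, and $G' = Q' \times P$ is cyclic.
   Context: $G'=[G,G]$ denotes the commutator subgroup of $G$, and $Q'$ that of $Q$. *)

theory Defs
  imports "HOL-Algebra.Algebra"
begin

definition sylow_subgroup :: "('a, 'b) monoid_scheme \<Rightarrow> nat \<Rightarrow> 'a set \<Rightarrow> bool" where
  "sylow_subgroup G p P \<longleftrightarrow>
     subgroup P G \<and> card P = p ^ multiplicity p (order G)"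

definition internal_semidirect :: "('a, 'b) monoid_scheme \<Rightarrow> 'a set \<Rightarrow> 'a set \<Rightarrow> bool" where
  "internal_semidirect G Q N \<longleftrightarrow>
     N \<lhd> G \<and> subgroup Q G \<and> Q <#>\<^bsub>G\<^esub> N = carrier G \<and> Q \<inter> N = {\<one>\<^bsub>G\<^esub>}"

definition internal_direct :: "('a, 'b) monoid_scheme \<Rightarrow> 'a set \<Rightarrow> 'a set \<Rightarrow> 'a set \<Rightarrow> bool" where
  "internal_direct G H A B \<longleftrightarrow>
     subgroup A G \<and> subgroup B G \<and> A <#>\<^bsub>G\<^esub> B = H \<and> A \<inter> B = {\<one>\<^bsub>G\<^esub>} \<and>
     (\<forall>a\<in>A. \<forall>b\<in>B. a \<otimes>\<^bsub>G\<^esub> b = b \<otimes>\<^bsub>G\<^esub> a)"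

end

theory Submission
  imports Defs
begin


lemma div16: "(n::nat) dvd 16 \<Longrightarrow> n = 1 \<or> n = 2 \<or> n = 4 \<or> n = 8 \<or> n = 16"
proof -
  assume "n dvd 16"
  then have "n dvd 2^4" by simp
  then obtain i where "i \<le> 4" "n = 2^i" using divides_primepow_nat[of 2 n 4] by auto
  moreover have "i \<in> {0,1,2,3,4}" using \<open>i \<le> 4\<close> by auto
  ultimately show ?thesis by auto
qed

definition center_set :: "('a, 'b) monoid_scheme \<Rightarrow> 'a set" where
  "center_set G = {z \<in> carrier G. \<forall>y\<in>carrier G. z \<otimes>\<^bsub>G\<^esub> y = y \<otimes>\<^bsub>G\<^esub> z}"

context group begin

lemma gcancel1: "x \<in> carrier G \<Longrightarrow> y \<in> carrier G \<Longrightarrow> inv x \<otimes> (x \<otimes> y) = y"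
  by (simp add: m_assoc[symmetric])
lemma gcancel2: "x \<in> carrier G \<Longrightarrow> y \<in> carrier G \<Longrightarrow> x \<otimes> (inv x \<otimes> y) = y"
  by (simp add: m_assoc[symmetric])
lemmas gsimps = m_assoc gcancel1 gcancel2 inv_mult_group

lemma comm_inv_l:
  assumes "x \<in> carrier G" "y \<in> carrier G" "x \<otimes> y = y \<otimes> x"
  shows "inv x \<otimes> y = y \<otimes> inv x"
proof -
  have e: "x \<otimes> (y \<otimes> inv x) = y"
  proof -
    have "x \<otimes> (y \<otimes> inv x) = (x \<otimes> y) \<otimes> inv x" using assms(1,2) by (simp add: m_assoc)
    also have "\<dots> = (y \<otimes> x) \<otimes> inv x" using assms by simp
    also have "\<dots> = y" using assms(1,2) by (simp add: m_assoc)
    finally show ?thesis .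
  qed
  have "inv x \<otimes> y = inv x \<otimes> (x \<otimes> (y \<otimes> inv x))" using e by simp
  also have "\<dots> = (inv x \<otimes> x) \<otimes> (y \<otimes> inv x)" using assms(1,2) by (simp add: gsimps)
  also have "\<dots> = y \<otimes> inv x" using assms(1,2) by simp
  finally show ?thesis .
qed

lemma comm_generate:
  assumes S: "S \<subseteq> carrier G" and A: "A \<subseteq> carrier G"
    and c: "\<And>s a. s \<in> S \<Longrightarrow> a \<in> A \<Longrightarrow> s \<otimes> a = a \<otimes> s"
    and w: "w \<in> generate G S" and a: "a \<in> A"
  shows "w \<otimes> a = a \<otimes> w"
  using w
proof (induction rule: generate.induct)
  case one then show ?case using a A by auto
next
  case (incl h) then show ?case using c a by auto
next
  case (inv h)
  then show ?case using comm_inv_l[of h a] c a A S by auto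
next
  case (eng h1 h2)
  have h1: "h1 \<in> carrier G" and h2: "h2 \<in> carrier G"
    using eng generate_in_carrier S by auto
  have aa: "a \<in> carrier G" using a A by auto
  have "h1 \<otimes> h2 \<otimes> a = h1 \<otimes> (h2 \<otimes> a)" using h1 h2 aa by (simp add: m_assoc)
  also have "\<dots> = h1 \<otimes> (a \<otimes> h2)" using eng by simp
  also have "\<dots> = (h1 \<otimes> a) \<otimes> h2" using h1 h2 aa by (simp add: m_assoc)
  also have "\<dots> = a \<otimes> (h1 \<otimes> h2)" using eng h1 h2 aa by (simp add: m_assoc)
  finally show ?case .
qed

lemma index2_decomp:
  assumes K: "subgroup K G" and M: "subgroup M G" and KM: "K \<subseteq> M" and fin: "finite M"
    and card: "card M = 2 * card K" and t: "t \<in> M" "t \<notin> K" and g: "g \<in> M"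
  shows "g \<in> K \<or> (\<exists>k\<in>K. g = t \<otimes> k)"
proof -
  interpret K: subgroup K G by (rule K)
  interpret M: subgroup M G by (rule M)
  have tc: "t \<in> carrier G" using t M.subset by auto
  let ?T = "(\<lambda>k. t \<otimes> k) ` K"
  have "inj_on (\<lambda>k. t \<otimes> k) K"
    by (rule inj_onI) (use tc K.subset in auto)
  then have cT: "card ?T = card K" by (rule card_image)
  have disj: "K \<inter> ?T = {}"
  proof (rule ccontr)
    assume "K \<inter> ?T \<noteq> {}"
    then obtain k where k: "k \<in> K" "t \<otimes> k \<in> K" by auto
    then have "t \<otimes> k \<otimes> inv k \<in> K" by auto
    then have "t \<in> K" using k tc K.subset by (simp add: m_assoc subset_iff)
    then show False using t by simp
  qed
  have sub: "K \<union> ?T \<subseteq> M" using KM t by auto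
  have finK: "finite K" using fin KM finite_subset by auto
  have "card (K \<union> ?T) = card K + card ?T"
    using disj finK by (simp add: card_Un_disjoint)
  then have "card (K \<union> ?T) = card M" using cT card by simp
  then have "K \<union> ?T = M" using sub fin card_subset_eq by blast
  then show ?thesis using g by auto
qed

lemma centerD: "z \<in> center_set G \<Longrightarrow> z \<in> carrier G"
  "z \<in> center_set G \<Longrightarrow> y \<in> carrier G \<Longrightarrow> z \<otimes> y = y \<otimes> z"
  unfolding center_set_def by blast+

lemma centerI: "z \<in> carrier G \<Longrightarrow> (\<And>y. y \<in> carrier G \<Longrightarrow> z \<otimes> y = y \<otimes> z) \<Longrightarrow> z \<in> center_set G"
  unfolding center_set_def by blast

lemma center_subgroup: "subgroup (center_set G) G"
proof (rule subgroupI)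
  show "center_set G \<subseteq> carrier G" by (auto simp: center_set_def)
  show "center_set G \<noteq> {}" using one_closed by (auto simp: center_set_def)
next
  fix a assume a: "a \<in> center_set G"
  then have ac: "a \<in> carrier G" and az: "\<And>y. y \<in> carrier G \<Longrightarrow> a \<otimes> y = y \<otimes> a"
    by (auto dest: centerD)
  have "inv a \<otimes> y = y \<otimes> inv a" if "y \<in> carrier G" for y
    by (rule comm_inv_l) (use ac that az in auto)
  then show "inv a \<in> center_set G" using ac by (intro centerI) auto
next
  fix a b assume a: "a \<in> center_set G" and b: "b \<in> center_set G"
  show "a \<otimes> b \<in> center_set G"
    unfolding center_set_def
  proof (intro CollectI conjI ballI)
    show "a \<otimes> b \<in> carrier G" using a b by (auto dest: centerD)
    fix y assume y: "y \<in> carrier G"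
    have ac: "a \<in> carrier G" "b \<in> carrier G" using a b by (auto dest: centerD)
    have "a \<otimes> b \<otimes> y = a \<otimes> (b \<otimes> y)" using ac y by (simp add: m_assoc)
    also have "\<dots> = a \<otimes> (y \<otimes> b)" using centerD(2)[OF b y] by simp
    also have "\<dots> = (a \<otimes> y) \<otimes> b" using ac y by (simp add: m_assoc)
    also have "\<dots> = (y \<otimes> a) \<otimes> b" using centerD(2)[OF a y] by simp
    also have "\<dots> = y \<otimes> (a \<otimes> b)" using ac y by (simp add: m_assoc)
    finally show "a \<otimes> b \<otimes> y = y \<otimes> (a \<otimes> b)" .
  qed
qed

abbreviation "conjact \<equiv> (\<lambda>g. (\<lambda>h \<in> carrier G. g \<otimes> h \<otimes> (inv g)))"

lemma conj_fix_iff: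
  assumes "g \<in> carrier G" "x \<in> carrier G"
  shows "g \<otimes> x \<otimes> inv g = x \<longleftrightarrow> g \<otimes> x = x \<otimes> g"
proof
  assume h: "g \<otimes> x \<otimes> inv g = x"
  have "g \<otimes> x = (g \<otimes> x \<otimes> inv g) \<otimes> g" using assms by (simp add: gsimps)
  also have "\<dots> = x \<otimes> g" by (simp only: h)
  finally show "g \<otimes> x = x \<otimes> g" .
next
  assume h: "g \<otimes> x = x \<otimes> g"
  then show "g \<otimes> x \<otimes> inv g = x" using assms by (simp add: gsimps)
qed

lemma class_dvd:
  assumes fin: "finite (carrier G)"
    and d: "\<And>x. x \<in> carrier G \<Longrightarrow> x \<notin> center_set G \<Longrightarrow> d dvd card (orbit G conjact x)"
  shows "d dvd card (carrier G - center_set G)"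
proof -
  interpret CA: group_action G "carrier G" conjact by (rule action_by_conjugation)
  let ?f = "\<lambda>x. if x \<notin> center_set G then 1 else (0::nat)"
  have e1: "(\<Sum>orb\<in>orbits G (carrier G) conjact. \<Sum>x\<in>orb. ?f x) = (\<Sum>x\<in>carrier G. ?f x)"
    by (rule CA.disjoint_sum[OF fin])
  have e2: "card (carrier G - center_set G) = (\<Sum>x\<in>carrier G. ?f x)"
    by (rule card_as_sums) (use fin in auto)
  have "d dvd (\<Sum>x\<in>orb. ?f x)" if orb: "orb \<in> orbits G (carrier G) conjact" for orb
  proof -
    obtain x where x: "x \<in> carrier G" and ox: "orb = orbit G conjact x"
      using orb unfolding orbits_def by auto
    have oel: "y \<in> orb \<Longrightarrow> \<exists>g\<in>carrier G. y = g \<otimes> x \<otimes> inv g" for y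
      using x unfolding ox orbit_def by auto
    show ?thesis
    proof (cases "x \<in> center_set G")
      case True
      have "?f y = 0" if yo: "y \<in> orb" for y
      proof -
        obtain g where g: "g \<in> carrier G" "y = g \<otimes> x \<otimes> inv g" using oel[OF yo] by (elim bexE)
        have "g \<otimes> x \<otimes> inv g = x"
          using conj_fix_iff[OF g(1) x, THEN iffD2, OF centerD(2)[OF True g(1), symmetric]] .
        then have "y = x" using g(2) by simp
        then show ?thesis using True by auto
      qed
      then show ?thesis by simp
    next
      case False
      have "?f y = 1" if yo: "y \<in> orb" for y
      proof -
        obtain g where g: "g \<in> carrier G" "y = g \<otimes> x \<otimes> inv g" using oel[OF yo] by (elim bexE)
        have yc: "y \<in> carrier G" using g x by auto
        have "y \<notin> center_set G"
        proof
          assume yz: "y \<in> center_set G"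
          have c1: "inv g \<otimes> y \<otimes> g = x" using g x by (simp add: gsimps)
          have c2: "y \<otimes> inv g = inv g \<otimes> y" using centerD(2)[OF yz] g by simp
          have "y = y \<otimes> inv g \<otimes> g" using g yc by (simp add: gsimps)
          also have "\<dots> = inv g \<otimes> y \<otimes> g" by (simp only: c2)
          also have "\<dots> = x" by (rule c1)
          finally have "y = x" .
          then show False using yz False by simp
        qed
        then show ?thesis by simp
      qed
      then have "(\<Sum>y\<in>orb. ?f y) = card orb" by simp
      then show ?thesis using d[OF x False] ox by simp
    qed
  qed
  then have "d dvd (\<Sum>orb\<in>orbits G (carrier G) conjact. \<Sum>x\<in>orb. ?f x)"
    by (rule dvd_sum)
  then show ?thesis using e1 e2 by simp
qed


lemma nat16a: "(a::nat) * s = 16 \<Longrightarrow> s \<in> {1,2,4,8} \<Longrightarrow> 2 dvd a"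
  by auto
lemma nat16b: "(a::nat) * s = 16 \<Longrightarrow> s \<in> {1,2,4} \<Longrightarrow> 4 dvd a"
  by auto

lemma sub_card_dvd16:
  assumes "order G = 16" "subgroup H G" shows "card H dvd 16"
  using lagrange[OF assms(2)] assms(1) by (metis dvd_triv_right)

lemma abelian8:
  assumes o16: "order G = 16" and x0: "x0 \<in> carrier G" and y0: "y0 \<in> carrier G"
    and nc: "x0 \<otimes> y0 \<noteq> y0 \<otimes> x0"
  shows "\<exists>A. subgroup A G \<and> card A = 8 \<and> (\<forall>a\<in>A. \<forall>b\<in>A. a \<otimes> b = b \<otimes> a)"
proof -
  have fin: "finite (carrier G)" using o16 order_gt_0_iff_finite by simp
  have c16: "card (carrier G) = 16" using o16 by (simp add: order_def)
  interpret CA: group_action G "carrier G" conjact by (rule action_by_conjugation)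
  let ?Z = "center_set G"
  have Zs: "subgroup ?Z G" by (rule center_subgroup)
  have Zsub: "?Z \<subseteq> carrier G" using centerD(1) by blast
  have subfin: "finite H" if "subgroup H G" for H
    using that fin subgroup.subset finite_subset by metis
  have Zc: "card ?Z dvd 16" by (rule sub_card_dvd16[OF o16 Zs])
  have Zne: "card ?Z \<ge> 1"
  proof -
    have "\<one> \<in> ?Z" by (rule centerI) auto
    then show ?thesis using subfin[OF Zs] by (metis One_nat_def Suc_leI card_gt_0_iff empty_iff)
  qed
  have ZD: "card (carrier G - ?Z) = 16 - card ?Z"
    using card_Diff_subset[OF finite_subset[OF Zsub fin] Zsub] c16 by simp
  have stab: "g \<in> stabilizer G conjact x \<longleftrightarrow> g \<in> carrier G \<and> g \<otimes> x = x \<otimes> g"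
    if x: "x \<in> carrier G" for x g
  proof -
    have "g \<in> stabilizer G conjact x \<longleftrightarrow> g \<in> carrier G \<and> g \<otimes> x \<otimes> inv g = x"
      unfolding stabilizer_def using x by simp
    then show ?thesis using conj_fix_iff[OF _ x] by blast
  qed
  have orbstab: "card (orbit G conjact x) * card (stabilizer G conjact x) = 16"
    if "x \<in> carrier G" for x
    using CA.orbit_stabilizer_theorem[OF that] o16 by simp
  have stabcases: "card (stabilizer G conjact x) \<in> {1,2,4,8}"
    if x: "x \<in> carrier G" and xz: "x \<notin> ?Z" for x
  proof -
    have ss: "subgroup (stabilizer G conjact x) G" by (rule CA.stabilizer_subgroup[OF x])
    have "card (stabilizer G conjact x) \<noteq> 16"
    proof
      assume h: "card (stabilizer G conjact x) = 16"
      have "stabilizer G conjact x \<subseteq> carrier G" by (rule CA.stabilizer_subset)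
      then have eq: "stabilizer G conjact x = carrier G"
        using h c16 fin card_subset_eq by metis
      have "x \<in> ?Z"
      proof (rule centerI[OF x])
        fix y assume y: "y \<in> carrier G"
        then have "y \<in> stabilizer G conjact x" using eq by simp
        then have "y \<otimes> x = x \<otimes> y" using stab[OF x] by simp
        then show "x \<otimes> y = y \<otimes> x" by simp
      qed
      then show False using xz by simp
    qed
    then show ?thesis using div16[OF sub_card_dvd16[OF o16 ss]] by auto
  qed
  have Zle: "card ?Z \<le> 16" using Zc by (simp add: dvd_imp_le)
  define S where "S = insert x0 ?Z"
  have x0Z: "x0 \<notin> ?Z"
  proof
    assume "x0 \<in> ?Z" then have "x0 \<otimes> y0 = y0 \<otimes> x0" using centerD(2)[OF _ y0] by blast
    then show False using nc by simp
  qed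
  show ?thesis
  proof (cases "\<exists>x\<in>carrier G. x \<notin> ?Z \<and> card (stabilizer G conjact x) = 8")
    case True
    then obtain x where x: "x \<in> carrier G" "x \<notin> ?Z" and s8: "card (stabilizer G conjact x) = 8"
      by blast
    let ?A = "stabilizer G conjact x"
    have As: "subgroup ?A G" by (rule CA.stabilizer_subgroup[OF x(1)])
    have "2 dvd card (carrier G - ?Z)"
    proof (rule class_dvd[OF fin])
      fix y assume "y \<in> carrier G" "y \<notin> ?Z"
      then show "2 dvd card (orbit G conjact y)"
        using nat16a[OF orbstab stabcases] by blast
    qed
    then have "2 dvd 16 - card ?Z" using ZD by simp
    then have Z2: "card ?Z \<ge> 2" using div16[OF Zc] by auto
    define W where "W = generate G (insert x ?Z)"
    have insS: "insert x ?Z \<subseteq> carrier G" using x Zsub by auto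
    have Ws: "subgroup W G" unfolding W_def by (rule generate_is_subgroup[OF insS])
    have insA: "insert x ?Z \<subseteq> ?A"
    proof
      fix s assume "s \<in> insert x ?Z"
      then show "s \<in> ?A"
      proof
        assume "s = x" then show ?thesis using stab[OF x(1)] x(1) by simp
      next
        assume sz: "s \<in> ?Z"
        then show ?thesis using stab[OF x(1)] centerD[OF sz] x(1) by simp
      qed
    qed
    have WA: "W \<subseteq> ?A" unfolding W_def by (rule generate_subgroup_incl[OF insA As])
    have Wcomm: "w \<otimes> a = a \<otimes> w" if "w \<in> W" "a \<in> ?A" for w a
    proof (rule comm_generate[OF insS CA.stabilizer_subset _ that[unfolded W_def]])
      fix s b assume s: "s \<in> insert x ?Z" and b: "b \<in> ?A"
      then have bx: "b \<otimes> x = x \<otimes> b" and bc: "b \<in> carrier G" using stab[OF x(1)] by auto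
      from s show "s \<otimes> b = b \<otimes> s"
      proof
        assume "s = x" then show ?thesis using bx by simp
      next
        assume "s \<in> ?Z" then show ?thesis using centerD(2)[OF _ bc] by simp
      qed
    qed
    have ZW: "?Z \<subseteq> W" unfolding W_def by (rule subsetI, rule generate.incl) simp
    have xW: "x \<in> W" unfolding W_def by (rule generate.incl) simp
    have "?Z \<subset> W" using ZW xW x(2) by blast
    then have "card ?Z < card W" by (rule psubset_card_mono[OF subfin[OF Ws]])
    moreover have "card W \<le> 8" using card_mono[OF subfin[OF As] WA] s8 by simp
    moreover have "card W = 1 \<or> card W = 2 \<or> card W = 4 \<or> card W = 8 \<or> card W = 16"
      by (rule div16[OF sub_card_dvd16[OF o16 Ws]])
    ultimately have W48: "card W = 4 \<or> card W = 8"
      using Z2 by (elim disjE; linarith)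
    have "\<forall>a\<in>?A. \<forall>b\<in>?A. a \<otimes> b = b \<otimes> a"
    proof (cases "card W = 8")
      case True
      then have eqWA: "W = ?A" using card_subset_eq[OF subfin[OF As] WA] s8 by simp
      show ?thesis
      proof (intro ballI)
        fix a b assume "a \<in> ?A" "b \<in> ?A"
        then show "a \<otimes> b = b \<otimes> a" using Wcomm[of a b] eqWA by blast
      qed
    next
      case False
      then have W4: "card W = 4" using W48 by simp
      have "W \<noteq> ?A" using W4 s8 by auto
      then obtain w where w: "w \<in> ?A" "w \<notin> W" using WA by blast
      have dec: "b \<in> W \<or> (\<exists>k\<in>W. b = w \<otimes> k)" if "b \<in> ?A" for b
        by (rule index2_decomp[OF Ws As WA subfin[OF As] _ w that]) (simp add: s8 W4)
      have Ac: "?A \<subseteq> carrier G" by (rule CA.stabilizer_subset)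
      show ?thesis
      proof (intro ballI)
        fix a b assume a: "a \<in> ?A" and b: "b \<in> ?A"
        show "a \<otimes> b = b \<otimes> a"
        proof (cases "a \<in> W")
          case True then show ?thesis using Wcomm[OF True b] by simp
        next
          case aW: False
          show ?thesis
          proof (cases "b \<in> W")
            case True then have "b \<otimes> a = a \<otimes> b" using Wcomm[OF True a] by simp
            then show ?thesis by simp
          next
            case False
            obtain u1 where u1: "u1 \<in> W" "a = w \<otimes> u1" using dec[OF a] aW by blast
            obtain u2 where u2: "u2 \<in> W" "b = w \<otimes> u2" using dec[OF b] False by blast
            have wc: "w \<in> carrier G" using w Ac by auto
            have u1c: "u1 \<in> carrier G" and u2c: "u2 \<in> carrier G" using u1 u2 WA Ac by auto
            have c1: "u1 \<otimes> w = w \<otimes> u1" by (rule Wcomm[OF u1(1) w(1)])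
            have c2: "u2 \<otimes> w = w \<otimes> u2" by (rule Wcomm[OF u2(1) w(1)])
            have c3: "u1 \<otimes> u2 = u2 \<otimes> u1" using Wcomm[OF u1(1)] u2(1) WA by blast
            have "a \<otimes> b = w \<otimes> (u1 \<otimes> w) \<otimes> u2" using u1 u2 wc u1c u2c by (simp add: m_assoc)
            also have "\<dots> = w \<otimes> w \<otimes> (u1 \<otimes> u2)" using wc u1c u2c by (simp add: c1 m_assoc)
            also have "\<dots> = w \<otimes> w \<otimes> (u2 \<otimes> u1)" by (simp only: c3)
            also have "\<dots> = w \<otimes> (u2 \<otimes> w) \<otimes> u1" using wc u1c u2c by (simp add: c2 m_assoc)
            also have "\<dots> = b \<otimes> a" using u1 u2 wc u1c u2c by (simp add: m_assoc)
            finally show ?thesis .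
          qed
        qed
      qed
    qed
    then show ?thesis using As s8 by blast
  next
    case False
    have "4 dvd card (carrier G - ?Z)"
    proof (rule class_dvd[OF fin])
      fix y assume y: "y \<in> carrier G" "y \<notin> ?Z"
      then have "card (stabilizer G conjact y) \<in> {1,2,4}" using stabcases False by auto
      then show "4 dvd card (orbit G conjact y)"
        using nat16b orbstab[OF y(1)] by blast
    qed
    then have "4 dvd 16 - card ?Z" using ZD by simp
    then have Z4: "card ?Z \<ge> 4" using div16[OF Zc] by auto
    have Ssub: "S \<subseteq> carrier G" unfolding S_def using x0 Zsub by auto
    define W where "W = generate G S"
    have Ws: "subgroup W G" unfolding W_def by (rule generate_is_subgroup[OF Ssub])
    have SS: "s \<otimes> a = a \<otimes> s" if "s \<in> S" "a \<in> S" for s a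
    proof (cases "s \<in> ?Z")
      case True then show ?thesis using centerD(2)[OF True] that Ssub by auto
    next
      case False
      then have s: "s = x0" using that S_def by auto
      show ?thesis
      proof (cases "a \<in> ?Z")
        case True then have "a \<otimes> s = s \<otimes> a" using centerD(2)[OF True] that Ssub by auto
        then show ?thesis by simp
      next
        case False then have "a = x0" using that S_def by auto
        then show ?thesis using s by simp
      qed
    qed
    have WS: "w \<otimes> a = a \<otimes> w" if "w \<in> W" "a \<in> S" for w a
      by (rule comm_generate[OF Ssub Ssub SS that[unfolded W_def]])
    have WW: "w \<otimes> a = a \<otimes> w" if "w \<in> W" "a \<in> W" for w a
    proof (rule comm_generate[OF Ssub _ _ that[unfolded W_def]])
      show "generate G S \<subseteq> carrier G" by (rule generate_incl[OF Ssub])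
      fix s b assume "s \<in> S" "b \<in> generate G S"
      then have "b \<otimes> s = s \<otimes> b" using WS[of b s] W_def by simp
      then show "s \<otimes> b = b \<otimes> s" by simp
    qed
    have ZW: "?Z \<subseteq> W" unfolding W_def S_def by (rule subsetI, rule generate.incl) simp
    have xW: "x0 \<in> W" unfolding W_def S_def by (rule generate.incl) simp
    have "?Z \<subset> W" using ZW xW x0Z by blast
    then have "card ?Z < card W" by (rule psubset_card_mono[OF subfin[OF Ws]])
    moreover have "card W = 1 \<or> card W = 2 \<or> card W = 4 \<or> card W = 8 \<or> card W = 16"
      by (rule div16[OF sub_card_dvd16[OF o16 Ws]])
    ultimately have W816: "card W = 8 \<or> card W = 16"
      using Z4 by (elim disjE; linarith)
    have "card W \<noteq> 16"
    proof
      assume "card W = 16"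
      then have "W = carrier G" using subgroup.subset[OF Ws] c16 fin card_subset_eq by metis
      then have "x0 \<otimes> y0 = y0 \<otimes> x0" using WW[OF xW] y0 by simp
      then show False using nc by simp
    qed
    then have "card W = 8" using W816 by simp
    then show ?thesis using Ws WW by blast
  qed
qed

end


context group begin

lemma gen_one: "generate G {\<one>} = {\<one>}"
proof
  show "generate G {\<one>} \<subseteq> {\<one>}" by (rule generate_subgroup_incl[OF _ triv_subgroup]) simp
  show "{\<one>} \<subseteq> generate G {\<one>}" using generate.one by auto
qed

lemma sub_nat_pow: "subgroup H G \<Longrightarrow> h \<in> H \<Longrightarrow> h [^] (n::nat) \<in> H"
proof (induct n)
  case 0 then show ?case by (simp add: subgroup.one_closed)
next
  case (Suc n)
  have "h \<in> carrier G" using subgroup.subset[OF Suc.prems(1)] Suc.prems(2) by blast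
  then show ?case using Suc by (simp add: subgroup.m_closed)
qed

lemma comm_swap_inv:
  assumes "x \<in> carrier G" "y \<in> carrier G"
  shows "x \<otimes> y \<otimes> inv x \<otimes> inv y = inv (y \<otimes> x \<otimes> inv y \<otimes> inv x)"
  using assms by (simp add: gsimps)

lemma comm_shift:
  assumes "x \<in> carrier G" "b \<in> carrier G"
  shows "x \<otimes> (x \<otimes> b) \<otimes> inv x \<otimes> inv (x \<otimes> b) = x \<otimes> (x \<otimes> b \<otimes> inv x \<otimes> inv b) \<otimes> inv x"
  using assms by (simp add: gsimps)

lemma ord_cases16:
  assumes o16: "order G = 16" and b: "b \<in> carrier G"
  shows "ord b = 1 \<or> ord b = 2 \<or> ord b = 4 \<or> ord b = 8 \<or> ord b = 16"
  using div16 ord_dvd_group_order[OF b] o16 by simp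

lemma derived16:
  assumes o16: "order G = 16"
  shows "\<exists>c\<in>carrier G. derived G (carrier G) = generate G {c}"
proof (cases "\<forall>x\<in>carrier G. \<forall>y\<in>carrier G. x \<otimes> y = y \<otimes> x")
  case True
  have "derived_set G (carrier G) \<subseteq> {\<one>}"
  proof
    fix z assume "z \<in> derived_set G (carrier G)"
    then obtain x y where xy: "x \<in> carrier G" "y \<in> carrier G" "z = x \<otimes> y \<otimes> inv x \<otimes> inv y"
      by blast
    have "x \<otimes> y = y \<otimes> x" using True xy(1,2) by simp
    then have "z = y \<otimes> x \<otimes> inv x \<otimes> inv y" using xy by simp
    also have "\<dots> = \<one>" using xy by (simp add: gsimps)
    finally show "z \<in> {\<one>}" by simp
  qed
  then have "derived G (carrier G) \<subseteq> generate G {\<one>}" unfolding derived_def by (rule mono_generate)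
  then have "derived G (carrier G) = generate G {\<one>}"
    using gen_one subgroup.one_closed[OF derived_is_subgroup[of "carrier G"]] by auto
  then show ?thesis by blast
next
  case False
  then obtain x0 y0 where x0: "x0 \<in> carrier G" and y0: "y0 \<in> carrier G" and nc: "x0 \<otimes> y0 \<noteq> y0 \<otimes> x0"
    by blast
  obtain A where As: "subgroup A G" and A8: "card A = 8" and Acomm: "\<And>a b. a \<in> A \<Longrightarrow> b \<in> A \<Longrightarrow> a \<otimes> b = b \<otimes> a"
    using abelian8[OF o16 x0 y0 nc] by blast
  have fin: "finite (carrier G)" using o16 order_gt_0_iff_finite by simp
  have c16: "card (carrier G) = 16" using o16 by (simp add: order_def)
  have Ac: "A \<subseteq> carrier G" by (rule subgroup.subset[OF As])
  have finA: "finite A" using Ac fin finite_subset by blast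
  have "A \<noteq> carrier G" using A8 c16 by auto
  then obtain t where tc: "t \<in> carrier G" and tA: "t \<notin> A" using Ac by blast
  have c2: "card (carrier G) = 2 * card A" using c16 A8 by simp
  have dec: "g \<in> A \<or> (\<exists>k\<in>A. g = t \<otimes> k)" if "g \<in> carrier G" for g
    using index2_decomp[OF As subgroup_self Ac fin c2 tc tA that] .
  have Am: "a \<otimes> b \<in> A" if "a \<in> A" "b \<in> A" for a b by (rule subgroup.m_closed[OF As that])
  have Ai: "inv a \<in> A" if "a \<in> A" for a by (rule subgroup.m_inv_closed[OF As that])
  have A1: "\<one> \<in> A" by (rule subgroup.one_closed[OF As])
  have Acar: "a \<in> carrier G" if "a \<in> A" for a using Ac that by blast
  have decE: "\<exists>k\<in>A. g = t \<otimes> k" if "g \<in> carrier G" "g \<notin> A" for g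
    using dec[OF that(1)] that(2) by simp
  define al where "al = (\<lambda>a. t \<otimes> a \<otimes> inv t)"
  define ph where "ph = (\<lambda>a. t \<otimes> a \<otimes> inv t \<otimes> inv a)"
  have alA: "al a \<in> A" if a: "a \<in> A" for a
  proof (rule ccontr)
    assume n: "al a \<notin> A"
    have alc0: "al a \<in> carrier G" unfolding al_def using tc Acar[OF a] by simp
    obtain k where k: "k \<in> A" "al a = t \<otimes> k" using decE[OF alc0 n] by (elim bexE)
    have "a \<otimes> inv t = inv t \<otimes> (t \<otimes> a \<otimes> inv t)" using tc Acar[OF a] by (simp add: gsimps)
    also have "\<dots> = inv t \<otimes> (t \<otimes> k)" using k(2) unfolding al_def by simp
    also have "\<dots> = k" using tc Acar[OF k(1)] by (simp add: gsimps)
    finally have "a \<otimes> inv t = k" .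
    then have "inv a \<otimes> (a \<otimes> inv t) = inv a \<otimes> k" by simp
    then have "inv t = inv a \<otimes> k" using tc Acar[OF a] by (simp add: gsimps)
    then have "inv t \<in> A" using Am[OF Ai[OF a] k(1)] by simp
    then have "inv (inv t) \<in> A" by (rule Ai)
    then show False using tA tc by simp
  qed
  have ttA: "t \<otimes> t \<in> A"
  proof (rule ccontr)
    assume n: "t \<otimes> t \<notin> A"
    obtain k where k: "k \<in> A" "t \<otimes> t = t \<otimes> k" using decE[OF m_closed[OF tc tc] n] by (elim bexE)
    have "t = k" by (rule l_cancel[OF k(2) tc Acar[OF k(1)] tc])
    then show False using k(1) tA by simp
  qed
  have al_mult: "al (a \<otimes> b) = al a \<otimes> al b" if "a \<in> carrier G" "b \<in> carrier G" for a b
    unfolding al_def using that tc by (simp add: gsimps)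
  have al_inv: "al (inv a) = inv (al a)" if "a \<in> carrier G" for a
    unfolding al_def using that tc by (simp add: gsimps)
  have al_al: "al (al a) = a" if a: "a \<in> A" for a
  proof -
    have e: "(t \<otimes> t) \<otimes> a = a \<otimes> (t \<otimes> t)" by (rule Acomm[OF ttA a])
    have "al (al a) = ((t \<otimes> t) \<otimes> a) \<otimes> inv (t \<otimes> t)" unfolding al_def using tc Acar[OF a] by (simp add: gsimps)
    also have "\<dots> = (a \<otimes> (t \<otimes> t)) \<otimes> inv (t \<otimes> t)" by (simp only: e)
    also have "\<dots> = a" using tc Acar[OF a] by (simp add: gsimps)
    finally show ?thesis .
  qed
  have ph_al: "ph a = al a \<otimes> inv a" for a unfolding ph_def al_def by simp
  have phA: "ph a \<in> A" if "a \<in> A" for a using ph_al Am alA Ai that by simp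
  have phc: "ph a \<in> carrier G" if "a \<in> A" for a using phA Acar that by blast
  have alc: "al a \<in> carrier G" if "a \<in> A" for a using alA Acar that by blast
  have ph_mult: "ph (a \<otimes> b) = ph a \<otimes> ph b" if a: "a \<in> A" and b: "b \<in> A" for a b
  proof -
    have e: "inv a \<otimes> (al b \<otimes> inv b) = (al b \<otimes> inv b) \<otimes> inv a"
      by (rule Acomm[OF Ai[OF a] Am[OF alA[OF b] Ai[OF b]]])
    have "ph (a \<otimes> b) = al a \<otimes> (al b \<otimes> inv b \<otimes> inv a)"
      unfolding ph_al using al_mult Acar a b alc by (simp add: gsimps)
    also have "\<dots> = al a \<otimes> (inv a \<otimes> (al b \<otimes> inv b))"
      using e Acar a b alc by (simp add: m_assoc)
    also have "\<dots> = ph a \<otimes> ph b"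
      unfolding ph_al using Acar a b alc by (simp add: m_assoc)
    finally show ?thesis .
  qed
  have ph_inv: "ph (inv a) = inv (ph a)" if a: "a \<in> A" for a
  proof -
    have "ph (inv a) = inv (al a) \<otimes> a" unfolding ph_al using al_inv Acar a by simp
    also have "\<dots> = a \<otimes> inv (al a)" by (rule Acomm[OF Ai[OF alA[OF a]] a])
    also have "\<dots> = inv (ph a)" unfolding ph_al using Acar a alc by (simp add: gsimps)
    finally show ?thesis .
  qed
  have ph1: "ph \<one> = \<one>" unfolding ph_def using tc by simp
  define P where "P = ph ` A"
  have PA: "P \<subseteq> A" unfolding P_def using phA by blast
  have inP: "ph a \<in> P" if "a \<in> A" for a unfolding P_def using that by (rule imageI)
  have Ps: "subgroup P G"
  proof (rule subgroupI)
    show "P \<subseteq> carrier G" using PA Ac by blast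
    show "P \<noteq> {}" unfolding P_def using A1 by blast
  next
    fix a assume "a \<in> P"
    then obtain a' where a': "a' \<in> A" "a = ph a'" unfolding P_def by blast
    have "inv a = ph (inv a')" using a' ph_inv[OF a'(1)] by simp
    then show "inv a \<in> P" using inP[OF Ai[OF a'(1)]] by simp
  next
    fix a b assume "a \<in> P" "b \<in> P"
    then obtain a' b' where "a' \<in> A" "a = ph a'" "b' \<in> A" "b = ph b'" unfolding P_def by blast
    then have "a \<otimes> b = ph (a' \<otimes> b')" using ph_mult by simp
    then show "a \<otimes> b \<in> P" using inP Am \<open>a' \<in> A\<close> \<open>b' \<in> A\<close> by simp
  qed
  have case2: "(t \<otimes> a1) \<otimes> a2 \<otimes> inv (t \<otimes> a1) \<otimes> inv a2 = ph a2" if a1: "a1 \<in> A" and a2: "a2 \<in> A" for a1 a2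
  proof -
    have e: "a1 \<otimes> a2 = a2 \<otimes> a1" by (rule Acomm[OF a1 a2])
    have "(t \<otimes> a1) \<otimes> a2 \<otimes> inv (t \<otimes> a1) \<otimes> inv a2 = t \<otimes> ((a1 \<otimes> a2) \<otimes> (inv a1 \<otimes> (inv t \<otimes> inv a2)))"
      using tc Acar a1 a2 by (simp add: gsimps)
    also have "\<dots> = t \<otimes> ((a2 \<otimes> a1) \<otimes> (inv a1 \<otimes> (inv t \<otimes> inv a2)))" by (simp only: e)
    also have "\<dots> = ph a2" unfolding ph_def using tc Acar a1 a2 by (simp add: gsimps)
    finally show ?thesis .
  qed
  have DP: "derived_set G (carrier G) \<subseteq> P"
  proof
    fix z assume "z \<in> derived_set G (carrier G)"
    then obtain x y where x: "x \<in> carrier G" and y: "y \<in> carrier G" and z: "z = x \<otimes> y \<otimes> inv x \<otimes> inv y"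
      by blast
    show "z \<in> P"
    proof (cases "x \<in> A")
      case xA: True
      show ?thesis
      proof (cases "y \<in> A")
        case True
        have e: "x \<otimes> y = y \<otimes> x" by (rule Acomm[OF xA True])
        have "z = y \<otimes> x \<otimes> inv x \<otimes> inv y" using z e by simp
        also have "\<dots> = ph \<one>" using x y ph1 by (simp add: gsimps)
        finally show ?thesis using inP[OF A1] by simp
      next
        case False
        obtain a2 where a2: "a2 \<in> A" "y = t \<otimes> a2" using decE[OF y False] by (elim bexE)
        have "z = inv (y \<otimes> x \<otimes> inv y \<otimes> inv x)" using z comm_swap_inv[OF x y] by simp
        also have "\<dots> = inv (ph x)" using case2[OF a2(1) xA] a2(2) by simp
        also have "\<dots> = ph (inv x)" using ph_inv[OF xA] by simp
        finally show ?thesis using inP[OF Ai[OF xA]] by simp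
      qed
    next
      case False
      obtain a1 where a1: "a1 \<in> A" "x = t \<otimes> a1" using decE[OF x False] by (elim bexE)
      show ?thesis
      proof (cases "y \<in> A")
        case True
        have "z = ph y" using case2[OF a1(1) True] a1(2) z by simp
        then show ?thesis using inP[OF True] by simp
      next
        case False
        obtain a2 where a2: "a2 \<in> A" "y = t \<otimes> a2" using decE[OF y False] by (elim bexE)
        define b where "b = inv a1 \<otimes> a2"
        have bA: "b \<in> A" unfolding b_def using Am Ai a1 a2 by blast
        have yb: "y = x \<otimes> b" unfolding b_def using a1 a2 tc Acar by (simp add: gsimps)
        have "z = x \<otimes> (x \<otimes> b \<otimes> inv x \<otimes> inv b) \<otimes> inv x"
          using z yb comm_shift[OF x Acar[OF bA]] by simp
        also have "\<dots> = x \<otimes> ph b \<otimes> inv x" using case2[OF a1(1) bA] a1(2) by simp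
        also have "\<dots> = t \<otimes> (a1 \<otimes> ph b \<otimes> inv a1) \<otimes> inv t"
          using a1 tc Acar phc bA by (simp add: gsimps)
        also have "\<dots> = t \<otimes> (ph b \<otimes> a1 \<otimes> inv a1) \<otimes> inv t"
          using Acomm[OF a1(1) phA[OF bA]] by simp
        also have "\<dots> = al (ph b)" unfolding al_def using a1 tc Acar phc bA by (simp add: gsimps)
        also have "\<dots> = ph (al b)"
          unfolding ph_al using al_mult al_inv al_al[OF bA] alc[OF bA] Acar[OF bA] by simp
        finally show ?thesis using inP[OF alA[OF bA]] by simp
      qed
    qed
  qed
  have PD: "P \<subseteq> derived_set G (carrier G)"
  proof
    fix z assume "z \<in> P"
    then obtain a where a: "a \<in> A" "z = ph a" unfolding P_def by blast
    then have "z = t \<otimes> a \<otimes> inv t \<otimes> inv a" unfolding ph_def by simp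
    then show "z \<in> derived_set G (carrier G)"
      by (rule ssubst) (rule UN_I[OF tc], rule UN_I[OF Acar[OF a(1)]], simp)
  qed
  have derP: "derived G (carrier G) = P"
  proof
    show "derived G (carrier G) \<subseteq> P" unfolding derived_def by (rule generate_subgroup_incl[OF DP Ps])
    show "P \<subseteq> derived G (carrier G)" unfolding derived_def using PD by (auto intro: generate.incl)
  qed
  define C where "C = {a \<in> A. ph a = \<one>}"
  have CA: "C \<subseteq> A" unfolding C_def by blast
  have finC: "finite C" using finA CA finite_subset by blast
  have finP: "finite P" using finA PA finite_subset by blast
  have fib: "card {a \<in> A. ph a = v} = card C" if v: "v \<in> P" for v
  proof -
    obtain a0 where a0: "a0 \<in> A" "v = ph a0" using v unfolding P_def by blast
    have "{a \<in> A. ph a = v} = (\<lambda>c. a0 \<otimes> c) ` C"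
    proof
      show "(\<lambda>c. a0 \<otimes> c) ` C \<subseteq> {a \<in> A. ph a = v}"
      proof
        fix a assume "a \<in> (\<lambda>c. a0 \<otimes> c) ` C"
        then obtain c where c: "c \<in> C" "a = a0 \<otimes> c" by blast
        have cA: "c \<in> A" and pc: "ph c = \<one>" using c(1) unfolding C_def by auto
        have "ph a = ph a0 \<otimes> ph c" using c(2) ph_mult[OF a0(1) cA] by simp
        then have "ph a = v" using pc a0 phc by simp
        then show "a \<in> {a \<in> A. ph a = v}" using c(2) Am[OF a0(1) cA] by simp
      qed
    next
      show "{a \<in> A. ph a = v} \<subseteq> (\<lambda>c. a0 \<otimes> c) ` C"
      proof
        fix a assume "a \<in> {a \<in> A. ph a = v}"
        then have a: "a \<in> A" "ph a = v" by auto
        define c where "c = inv a0 \<otimes> a"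
        have cA: "c \<in> A" unfolding c_def using Am Ai a0 a by blast
        have "ph c = inv (ph a0) \<otimes> ph a" unfolding c_def using ph_mult[OF Ai[OF a0(1)] a(1)] ph_inv[OF a0(1)] by simp
        then have "ph c = \<one>" using a a0 phc by simp
        then have "c \<in> C" unfolding C_def using cA by simp
        moreover have "a = a0 \<otimes> c" unfolding c_def using a0 a Acar by (simp add: gsimps)
        ultimately show "a \<in> (\<lambda>c. a0 \<otimes> c) ` C" by blast
      qed
    qed
    moreover have "inj_on (\<lambda>c. a0 \<otimes> c) C"
    proof (rule inj_onI)
      fix x y assume "x \<in> C" "y \<in> C" "a0 \<otimes> x = a0 \<otimes> y"
      then show "x = y" using l_cancel[of a0 x y] Acar[OF a0(1)] Acar CA by blast
    qed
    ultimately show ?thesis by (simp add: card_image)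
  qed
  have AU: "A = (\<Union>v\<in>P. {a \<in> A. ph a = v})" unfolding P_def by blast
  have "card A = (\<Sum>v\<in>P. card {a \<in> A. ph a = v})"
    by (subst AU, rule card_UN_disjoint) (use finP finA in auto)
  also have "\<dots> = (\<Sum>v\<in>P. card C)" using fib by simp
  also have "\<dots> = card P * card C" by simp
  finally have cnt: "card P * card C = 8" using A8 by simp
  have C1: "\<one> \<in> C" unfolding C_def using A1 ph1 by simp
  have ph_ph: "ph b = inv b \<otimes> inv b" if b: "b \<in> P" for b
  proof -
    obtain a where a: "a \<in> A" "b = ph a" using b unfolding P_def by blast
    have "ph (ph a) = al (ph a) \<otimes> inv (ph a)" by (rule ph_al)
    also have "\<dots> = (a \<otimes> inv (al a)) \<otimes> inv (ph a)"
      unfolding ph_al using al_mult al_inv al_al[OF a(1)] alc[OF a(1)] Acar[OF a(1)] by simp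
    also have "\<dots> = inv (ph a) \<otimes> inv (ph a)" unfolding ph_al using Acar[OF a(1)] alc[OF a(1)] by (simp add: gsimps)
    finally show ?thesis using a by simp
  qed
  have psi: "a \<otimes> al a \<in> C" if a: "a \<in> A" for a
  proof -
    have "ph (a \<otimes> al a) = ph a \<otimes> ph (al a)" by (rule ph_mult[OF a alA[OF a]])
    also have "\<dots> = (al a \<otimes> inv a) \<otimes> (a \<otimes> inv (al a))" unfolding ph_al using al_al[OF a] by simp
    also have "\<dots> = \<one>" using Acar[OF a] alc[OF a] by (simp add: gsimps)
    finally show ?thesis unfolding C_def using Am[OF a alA[OF a]] by simp
  qed
  have Pdvd: "card P = 1 \<or> card P = 2 \<or> card P = 4 \<or> card P = 8 \<or> card P = 16"
    by (rule div16[OF sub_card_dvd16[OF o16 Ps]])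
  have Ple: "card P \<le> 8" using card_mono[OF finA PA] A8 by simp
  have genP: "generate G {b} = P" if b: "b \<in> P" and ob: "ord b = card P" for b
  proof -
    have bc: "b \<in> carrier G" using b PA Ac by blast
    have sub: "generate G {b} \<subseteq> P" by (rule generate_subgroup_incl[OF _ Ps]) (use b in simp)
    have "card (generate G {b}) = card P" using generate_pow_card[OF bc] ob by simp
    then show ?thesis using card_subset_eq[OF finP sub] by simp
  qed
  have ordle: "ord b \<le> card P" if b: "b \<in> P" for b
  proof -
    have bc: "b \<in> carrier G" using b PA Ac by blast
    have sub: "generate G {b} \<subseteq> P" by (rule generate_subgroup_incl[OF _ Ps]) (use b in simp)
    show ?thesis using generate_pow_card[OF bc] card_mono[OF finP sub] by simp
  qed
  have "\<exists>b\<in>P. ord b = card P"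
  proof -
    have "card P = 1 \<or> card P = 2 \<or> card P = 4 \<or> card P = 8" using Pdvd Ple by auto
    then show ?thesis
    proof (elim disjE)
      assume h: "card P = 1"
      have "\<one> \<in> P" unfolding P_def using A1 ph1 by (metis image_eqI)
      then show ?thesis using h by force
    next
      assume h: "card P = 2"
      have "P \<noteq> {\<one>}" using h by auto
      moreover have "P \<noteq> {}" using h by auto
      ultimately obtain b where b: "b \<in> P" "b \<noteq> \<one>" by blast
      have bc: "b \<in> carrier G" using b PA Ac by blast
      have "ord b \<noteq> 1" using ord_eq_1[OF bc] b by simp
      then have "ord b = 2" using ordle[OF b(1)] h ord_cases16[OF o16 bc] by auto
      then show ?thesis using b h by auto
    next
      assume h: "card P = 4"
      then have hC: "card C = 2" using cnt by simp
      have "\<exists>b\<in>P. b \<otimes> b \<noteq> \<one>"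
      proof (rule ccontr)
        assume "\<not> (\<exists>b\<in>P. b \<otimes> b \<noteq> \<one>)"
        then have sq: "b \<otimes> b = \<one>" if "b \<in> P" for b using that by blast
        have "P \<subseteq> C"
        proof
          fix b assume b: "b \<in> P"
          have bc: "b \<in> carrier G" using b PA Ac by blast
          have "ph b = inv (b \<otimes> b)" using ph_ph[OF b] bc by (simp add: inv_mult_group)
          then have "ph b = \<one>" using sq[OF b] by simp
          then show "b \<in> C" unfolding C_def using b PA by blast
        qed
        then have "card P \<le> card C" using card_mono[OF finC] by blast
        then show False using h hC by simp
      qed
      then obtain b where b: "b \<in> P" "b \<otimes> b \<noteq> \<one>" by blast
      have bc: "b \<in> carrier G" using b PA Ac by blast
      have "b [^] (2::nat) \<noteq> \<one>" using b bc by (simp add: numeral_2_eq_2)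
      then have "\<not> ord b dvd 2" using pow_eq_id[OF bc] by simp
      then have "ord b = 4" using ordle[OF b(1)] h ord_cases16[OF o16 bc] by auto
      then show ?thesis using b h by auto
    next
      assume h: "card P = 8"
      then have hC: "card C = 1" using cnt by simp
      then have Ceq: "C = {\<one>}" using C1 finC by (metis card_1_singletonE singletonD)
      have "A \<noteq> {\<one>}" using A8 by auto
      then obtain a where a: "a \<in> A" "a \<noteq> \<one>" using A1 by blast
      have ac: "a \<in> carrier G" using Acar a by blast
      define k where "k = ord a"
      have subA: "generate G {a} \<subseteq> A" by (rule generate_subgroup_incl[OF _ As]) (use a in simp)
      have "k \<le> 8" unfolding k_def using generate_pow_card[OF ac] card_mono[OF finA subA] A8 by simp
      moreover have "k \<noteq> 1" unfolding k_def using ord_eq_1[OF ac] a by simp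
      ultimately have k248: "k = 2 \<or> k = 4 \<or> k = 8" using ord_cases16[OF o16 ac] unfolding k_def by auto
      define e where "e = a [^] (k div 2)"
      have eA: "e \<in> A" unfolding e_def by (rule sub_nat_pow[OF As a(1)])
      have ec: "e \<in> carrier G" using Acar eA by blast
      have "e \<noteq> \<one>"
      proof
        assume "e = \<one>"
        then have "k dvd k div 2" using pow_eq_id[OF ac] unfolding e_def k_def by simp
        then show False using k248 by auto
      qed
      have ee: "e \<otimes> e = \<one>"
      proof -
        have "e \<otimes> e = a [^] (k div 2 + k div 2)" unfolding e_def using ac by (simp add: nat_pow_mult)
        also have "k div 2 + k div 2 = k" using k248 by auto
        finally show ?thesis unfolding k_def using ac by simp
      qed
      have "e \<otimes> al e = \<one>" using psi[OF eA] Ceq by simp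
      then have ale: "al e = inv e"
      proof -
        assume h: "e \<otimes> al e = \<one>"
        have "al e = inv e \<otimes> (e \<otimes> al e)" using ec alc[OF eA] by (simp add: gsimps)
        then show ?thesis using h ec by simp
      qed
      have "ph e = inv e \<otimes> inv e" unfolding ph_al using ale by simp
      also have "\<dots> = inv (e \<otimes> e)" using ec by (simp add: inv_mult_group)
      also have "\<dots> = \<one>" using ee by simp
      finally have "e \<in> C" unfolding C_def using eA by simp
      then show ?thesis using Ceq \<open>e \<noteq> \<one>\<close> by simp
    qed
  qed
  then obtain b where b: "b \<in> P" "ord b = card P" by blast
  then have "derived G (carrier G) = generate G {b}" using genP derP by simp
  moreover have "b \<in> carrier G" using b PA Ac by blast
  ultimately show ?thesis by blast
qed

end
lemma (in group) pow_card_sub: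
  assumes fin: "finite (carrier G)" and K: "subgroup K G" and x: "x \<in> K"
  shows "x [^] card K = \<one>"
proof -
  interpret K: group "G\<lparr>carrier := K\<rparr>" by (rule subgroup_imp_group[OF K])
  have "x [^]\<^bsub>G\<lparr>carrier := K\<rparr>\<^esub> order (G\<lparr>carrier := K\<rparr>) = \<one>\<^bsub>G\<lparr>carrier := K\<rparr>\<^esub>"
    using x by (intro K.pow_order_eq_1) simp
  then show ?thesis by (simp add: order_def nat_pow_consistent[symmetric])
qed

lemma (in group) pow_mod_eq:
  assumes x: "x \<in> carrier G" and m: "x [^] (m::nat) = \<one>"
  shows "x [^] (n::nat) = x [^] (n mod m)"
proof -
  have "x [^] n = x [^] (m * (n div m) + n mod m)" by simp
  also have "\<dots> = (x [^] m) [^] (n div m) \<otimes> x [^] (n mod m)"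
    using x by (simp add: nat_pow_mult nat_pow_pow)
  also have "\<dots> = x [^] (n mod m)" using m x by simp
  finally show ?thesis .
qed

lemma (in group) conj_pow:
  assumes g: "g \<in> carrier G" and x: "x \<in> carrier G"
  shows "g \<otimes> (x [^] (n::nat)) \<otimes> inv g = (g \<otimes> x \<otimes> inv g) [^] n"
proof (induct n)
  case 0 then show ?case using g by simp
next
  case (Suc n)
  have "g \<otimes> (x [^] Suc n) \<otimes> inv g = (g \<otimes> (x [^] n) \<otimes> inv g) \<otimes> (g \<otimes> x \<otimes> inv g)"
    using g x by (simp add: gsimps)
  also have "\<dots> = (g \<otimes> x \<otimes> inv g) [^] Suc n" using Suc by simp
  finally show ?case .
qed

lemma (in group) cyclic_generate:
  assumes g: "g \<in> carrier G"
  shows "cyclic_group (subgroup_generated G (generate G {g}))"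
proof -
  have gs: "subgroup (generate G {g}) G" by (rule generate_is_subgroup) (use g in simp)
  have e1: "generate G (carrier G \<inter> generate G {g}) = generate G {g}"
  proof -
    have "carrier G \<inter> generate G {g} = generate G {g}" using subgroup.subset[OF gs] by blast
    moreover have "generate G (generate G {g}) = generate G {g}"
    proof
      show "generate G (generate G {g}) \<subseteq> generate G {g}" by (rule generate_subgroup_incl[OF _ gs]) simp
      show "generate G {g} \<subseteq> generate G (generate G {g})" by (auto intro: generate.incl)
    qed
    ultimately show ?thesis by simp
  qed
  have e2: "carrier G \<inter> {g} = {g}" using g by blast
  have "subgroup_generated G (generate G {g}) = subgroup_generated G {g}"
    unfolding subgroup_generated_def using e1 e2 by simp
  then show ?thesis using cyclic_group_generated by simp
qed

lemma mult16: "Factorial_Ring.prime (p::nat) \<Longrightarrow> odd p \<Longrightarrow> multiplicity p (16 * p) = 1"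
proof -
  assume pp: "Factorial_Ring.prime p" and po: "odd p"
  have "\<not> p dvd 16"
  proof
    assume "p dvd 16"
    then have "p dvd 2 ^ 4" by simp
    then have "p dvd 2" using prime_dvd_power pp by blast
    then have "p \<le> 2" by (simp add: dvd_imp_le)
    moreover have "p \<ge> 2" using pp prime_ge_2_nat by blast
    ultimately show False using po by simp
  qed
  then have "multiplicity p (16::nat) = 0" by (simp add: not_dvd_imp_multiplicity_0)
  moreover have "multiplicity p p = 1" using pp by (simp add: multiplicity_prime)
  moreover have "multiplicity p (16 * p) = multiplicity p 16 + multiplicity p p"
    using pp by (intro prime_elem_multiplicity_mult_distrib) auto
  ultimately show ?thesis by simp
qed

lemma mult2: "Factorial_Ring.prime (p::nat) \<Longrightarrow> odd p \<Longrightarrow> multiplicity 2 (16 * p) = 4"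
proof -
  assume pp: "Factorial_Ring.prime p" and po: "odd p"
  have "multiplicity (2::nat) (2^4) = 4" by (rule multiplicity_prime_power) simp
  then have m16: "multiplicity (2::nat) 16 = 4" by simp
  have "multiplicity (2::nat) p = 0" using po by (simp add: not_dvd_imp_multiplicity_0)
  moreover have "multiplicity (2::nat) (16 * p) = multiplicity (2::nat) 16 + multiplicity (2::nat) p"
    using pp by (intro prime_elem_multiplicity_mult_distrib) auto
  ultimately show ?thesis using m16 by simp
qed

lemma odd_pow4: "odd (p::nat) \<Longrightarrow> p ^ 4 mod 16 = 1"
proof -
  assume po: "odd p"
  define r where "r = p mod 16"
  have "r < 16" unfolding r_def by simp
  moreover have "odd r" unfolding r_def using po by (simp add: odd_iff_mod_2_eq_one mod_mod_cancel)
  ultimately have "r = 1 \<or> r = 3 \<or> r = 5 \<or> r = 7 \<or> r = 9 \<or> r = 11 \<or> r = 13 \<or> r = 15" by presburger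
  moreover have "p ^ 4 mod 16 = r ^ 4 mod 16" unfolding r_def by (simp add: power_mod)
  ultimately show ?thesis by (elim disjE) simp_all
qed

locale g16p = group G for G (structure) +
  fixes p :: nat and P Q :: "'a set"
  assumes fin: "finite (carrier G)" and pp: "Factorial_Ring.prime p" and po: "odd p"
    and oG: "order G = 16 * p" and PN: "P \<lhd> G" and cP: "card P = p"
    and Qs: "subgroup Q G" and cQ: "card Q = 16"
begin

lemma Ps: "subgroup P G" using PN normal_imp_subgroup by blast
lemma Pc: "P \<subseteq> carrier G" using subgroup.subset[OF Ps] .
lemma Qc: "Q \<subseteq> carrier G" using subgroup.subset[OF Qs] .
lemma p2: "p \<ge> 3"
proof -
  have "p \<ge> 2" using pp prime_ge_2_nat by blast
  then show ?thesis using po by presburger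
qed

lemma Pmem: "x \<in> P \<Longrightarrow> x \<in> carrier G" using Pc by blast
lemma Qmem: "x \<in> Q \<Longrightarrow> x \<in> carrier G" using Qc by blast

lemma QP_inter: "Q \<inter> P = {\<one>}"
proof
  show "{\<one>} \<subseteq> Q \<inter> P" using subgroup.one_closed[OF Qs] subgroup.one_closed[OF Ps] by blast
  show "Q \<inter> P \<subseteq> {\<one>}"
  proof
    fix x assume x: "x \<in> Q \<inter> P"
    have xc: "x \<in> carrier G" using x Qc by blast
    have "x [^] (16::nat) = \<one>" using pow_card_sub[OF fin Qs] x cQ by auto
    then have d1: "ord x dvd 16" using pow_eq_id[OF xc] by simp
    have "x [^] p = \<one>" using pow_card_sub[OF fin Ps] x cP by auto
    then have d2: "ord x dvd p" using pow_eq_id[OF xc] by simp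
    have "ord x = 1 \<or> ord x = p" using d2 pp by (simp add: prime_nat_iff)
    moreover have "ord x \<noteq> p"
    proof
      assume "ord x = p"
      then have "p dvd 16" using d1 by simp
      then have "p = 1 \<or> p = 2 \<or> p = 4 \<or> p = 8 \<or> p = 16" by (rule div16)
      then show False using po p2 by auto
    qed
    ultimately have "ord x = 1" by simp
    then show "x \<in> {\<one>}" using ord_eq_1[OF xc] by simp
  qed
qed

lemma decomp_unique:
  assumes "q1 \<in> Q" "x1 \<in> P" "q2 \<in> Q" "x2 \<in> P" "q1 \<otimes> x1 = q2 \<otimes> x2"
  shows "q1 = q2 \<and> x1 = x2"
proof -
  have c: "q1 \<in> carrier G" "x1 \<in> carrier G" "q2 \<in> carrier G" "x2 \<in> carrier G"
    using assms Qc Pc by auto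
  have "inv q2 \<otimes> q1 = x2 \<otimes> inv x1"
  proof -
    have "inv q2 \<otimes> q1 = inv q2 \<otimes> (q1 \<otimes> x1) \<otimes> inv x1" using c by (simp add: gsimps)
    also have "\<dots> = inv q2 \<otimes> (q2 \<otimes> x2) \<otimes> inv x1" using assms(5) by simp
    also have "\<dots> = x2 \<otimes> inv x1" using c by (simp add: gsimps)
    finally show ?thesis .
  qed
  moreover have "inv q2 \<otimes> q1 \<in> Q"
    using subgroup.m_closed[OF Qs subgroup.m_inv_closed[OF Qs assms(3)] assms(1)] .
  moreover have "x2 \<otimes> inv x1 \<in> P"
    using subgroup.m_closed[OF Ps assms(4) subgroup.m_inv_closed[OF Ps assms(2)]] .
  ultimately have "inv q2 \<otimes> q1 \<in> Q \<inter> P" by simp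
  then have e: "inv q2 \<otimes> q1 = \<one>" using QP_inter by simp
  have "q1 = q2 \<otimes> (inv q2 \<otimes> q1)" using c by (simp add: gsimps)
  then have qq: "q1 = q2" using e c by simp
  then have "q1 \<otimes> x1 = q1 \<otimes> x2" using assms(5) by simp
  then have "x1 = x2" by (rule l_cancel[OF _ c(2) c(4) c(1)])
  then show ?thesis using qq by simp
qed

lemma QP_mult: "Q <#> P = carrier G"
proof -
  have sub: "Q <#> P \<subseteq> carrier G" unfolding set_mult_def using Qc Pc by blast
  have eq: "Q <#> P = (\<lambda>(q, x). q \<otimes> x) ` (Q \<times> P)" unfolding set_mult_def by auto
  have inj: "inj_on (\<lambda>(q, x). q \<otimes> x) (Q \<times> P)"
    by (rule inj_onI) (use decomp_unique in auto)
  have finQ: "finite Q" using fin Qc finite_subset by blast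
  have finP: "finite P" using fin Pc finite_subset by blast
  have "card (Q <#> P) = card Q * card P" using eq card_image[OF inj] card_cartesian_product by simp
  also have "\<dots> = card (carrier G)" using cQ cP oG by (simp add: order_def)
  finally show ?thesis using card_subset_eq[OF fin sub] by simp
qed

lemma decomp:
  assumes "g \<in> carrier G" obtains q x where "q \<in> Q" "x \<in> P" "g = q \<otimes> x"
proof -
  have "g \<in> Q <#> P" using assms QP_mult by simp
  then obtain q x where "q \<in> Q" "x \<in> P" "g \<in> {q \<otimes> x}" unfolding set_mult_def by blast
  then show ?thesis using that by blast
qed

definition pi :: "'a \<Rightarrow> 'a" where
  "pi g = (THE q. q \<in> Q \<and> (\<exists>x\<in>P. g = q \<otimes> x))"

lemma pi_eq: assumes "q \<in> Q" "x \<in> P" shows "pi (q \<otimes> x) = q"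
  unfolding pi_def
proof (rule the_equality)
  show "q \<in> Q \<and> (\<exists>x'\<in>P. q \<otimes> x = q \<otimes> x')" using assms by blast
next
  fix q' assume "q' \<in> Q \<and> (\<exists>x'\<in>P. q \<otimes> x = q' \<otimes> x')"
  then obtain x' where "q' \<in> Q" "x' \<in> P" "q \<otimes> x = q' \<otimes> x'" by blast
  then show "q' = q" using decomp_unique[OF assms] by metis
qed

lemma pi_hom: "pi \<in> hom G G"
proof -
  have "pi g \<in> carrier G" if g: "g \<in> carrier G" for g
  proof -
    obtain q x where "q \<in> Q" "x \<in> P" "g = q \<otimes> x" using decomp[OF g] by blast
    then show ?thesis using pi_eq Qc by auto
  qed
  moreover have "pi (g \<otimes> h) = pi g \<otimes> pi h" if g: "g \<in> carrier G" and h: "h \<in> carrier G" for g h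
  proof -
    obtain q1 x1 where 1: "q1 \<in> Q" "x1 \<in> P" "g = q1 \<otimes> x1" using decomp[OF g] by blast
    obtain q2 x2 where 2: "q2 \<in> Q" "x2 \<in> P" "h = q2 \<otimes> x2" using decomp[OF h] by blast
    have c: "q1 \<in> carrier G" "x1 \<in> carrier G" "q2 \<in> carrier G" "x2 \<in> carrier G"
      using 1 2 Qc Pc by auto
    have w: "inv q2 \<otimes> x1 \<otimes> q2 \<in> P" using normal.inv_op_closed1[OF PN c(3) 1(2)] .
    have wx: "(inv q2 \<otimes> x1 \<otimes> q2) \<otimes> x2 \<in> P" using subgroup.m_closed[OF Ps w 2(2)] .
    have qq: "q1 \<otimes> q2 \<in> Q" using subgroup.m_closed[OF Qs 1(1) 2(1)] .
    have "g \<otimes> h = (q1 \<otimes> q2) \<otimes> ((inv q2 \<otimes> x1 \<otimes> q2) \<otimes> x2)" using 1 2 c by (simp add: gsimps)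
    then have "pi (g \<otimes> h) = q1 \<otimes> q2" using pi_eq[OF qq wx] by simp
    moreover have "pi g = q1" "pi h = q2" using pi_eq 1 2 by auto
    ultimately show ?thesis by simp
  qed
  ultimately show ?thesis unfolding hom_def by auto
qed

lemma pi_img: "pi ` carrier G = Q"
proof
  show "pi ` carrier G \<subseteq> Q"
  proof
    fix a assume "a \<in> pi ` carrier G"
    then obtain g where g: "g \<in> carrier G" "a = pi g" by blast
    obtain q x where "q \<in> Q" "x \<in> P" "g = q \<otimes> x" using decomp[OF g(1)] by blast
    then show "a \<in> Q" using g pi_eq by simp
  qed
  show "Q \<subseteq> pi ` carrier G"
  proof
    fix q assume q: "q \<in> Q"
    have "pi (q \<otimes> \<one>) = q" using pi_eq[OF q subgroup.one_closed[OF Ps]] .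
    then have "pi q = q" using q Qc by auto
    then show "q \<in> pi ` carrier G" using q Qc by (metis image_eqI subsetD)
  qed
qed

lemma derived_sub: "derived G (carrier G) \<subseteq> derived G Q <#> P"
proof
  fix g assume g: "g \<in> derived G (carrier G)"
  interpret PI: group_hom G G pi
    unfolding group_hom_def group_hom_axioms_def using is_group pi_hom by simp
  have "derived G (pi ` carrier G) = pi ` derived G (carrier G)"
    by (rule PI.derived_img) simp
  then have "pi g \<in> derived G Q" using g pi_img by auto
  moreover have gc: "g \<in> carrier G" using g derived_in_carrier[of "carrier G"] by blast
  obtain q x where qx: "q \<in> Q" "x \<in> P" "g = q \<otimes> x" using decomp[OF gc] by blast
  ultimately have "q \<in> derived G Q" using pi_eq by simp
  then show "g \<in> derived G Q <#> P" using qx unfolding set_mult_def by blast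
qed

end
context g16p begin

lemma finP: "finite P" using fin Pc finite_subset by blast
lemma finQ: "finite Q" using fin Qc finite_subset by blast

lemma ypow: "y \<in> P \<Longrightarrow> y [^] p = \<one>"
  using pow_card_sub[OF fin Ps] cP by simp

lemma Pgen:
  assumes y: "y \<in> P" and y1: "y \<noteq> \<one>"
  shows "generate G {y} = P"
proof -
  have yc: "y \<in> carrier G" using y Pc by blast
  have "ord y dvd p" using ypow[OF y] pow_eq_id[OF yc] by simp
  then have "ord y = 1 \<or> ord y = p" using pp by (simp add: prime_nat_iff)
  moreover have "ord y \<noteq> 1" using ord_eq_1[OF yc] y1 by simp
  ultimately have o: "ord y = p" by simp
  have sub: "generate G {y} \<subseteq> P" by (rule generate_subgroup_incl[OF _ Ps]) (use y in simp)
  have "card (generate G {y}) = card P" using generate_pow_card[OF yc] o cP by simp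
  then show ?thesis using card_subset_eq[OF finP sub] by simp
qed

lemma Pex: "\<exists>y\<in>P. y \<noteq> \<one>"
proof (rule ccontr)
  assume "\<not> (\<exists>y\<in>P. y \<noteq> \<one>)"
  then have "P \<subseteq> {\<one>}" by blast
  then have "card P \<le> 1" using card_mono[of "{\<one>}" P] by simp
  then show False using cP p2 by simp
qed

lemma Ppow:
  assumes y: "y \<in> P" "y \<noteq> \<one>" and z: "z \<in> P"
  shows "\<exists>n::nat. z = y [^] n"
proof -
  have yc: "y \<in> carrier G" using y Pc by blast
  have "z \<in> generate G {y}" using Pgen[OF y] z by simp
  then show ?thesis using generate_pow_on_finite_carrier[OF fin yc] by blast
qed

lemma Pcomm:
  assumes a: "a \<in> P" and b: "b \<in> P" shows "a \<otimes> b = b \<otimes> a"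
proof -
  obtain y where y: "y \<in> P" "y \<noteq> \<one>" using Pex by blast
  have yc: "y \<in> carrier G" using y Pc by blast
  obtain m :: nat where m: "a = y [^] m" using Ppow[OF y a] by blast
  obtain n :: nat where n: "b = y [^] n" using Ppow[OF y b] by blast
  have "a \<otimes> b = y [^] (m + n)" using m n yc by (simp add: nat_pow_mult)
  also have "\<dots> = y [^] (n + m)" by (simp add: add.commute)
  also have "\<dots> = b \<otimes> a" using m n yc by (simp add: nat_pow_mult)
  finally show ?thesis .
qed

lemma conj_commute:
  assumes g: "g \<in> carrier G" and h: "h \<in> carrier G" and z: "z \<in> P"
  shows "g \<otimes> (h \<otimes> z \<otimes> inv h) \<otimes> inv g = h \<otimes> (g \<otimes> z \<otimes> inv g) \<otimes> inv h"
proof -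
  obtain y where y: "y \<in> P" "y \<noteq> \<one>" using Pex by blast
  have yc: "y \<in> carrier G" using y Pc by blast
  obtain a :: nat where a: "g \<otimes> y \<otimes> inv g = y [^] a"
    using Ppow[OF y normal.inv_op_closed2[OF PN g y(1)]] by blast
  obtain b :: nat where b: "h \<otimes> y \<otimes> inv h = y [^] b"
    using Ppow[OF y normal.inv_op_closed2[OF PN h y(1)]] by blast
  obtain n :: nat where n: "z = y [^] n" using Ppow[OF y z] by blast
  have e1: "h \<otimes> z \<otimes> inv h = y [^] (b * n)"
    using n conj_pow[OF h yc, of n] b yc by (simp add: nat_pow_pow)
  have e2: "g \<otimes> z \<otimes> inv g = y [^] (a * n)"
    using n conj_pow[OF g yc, of n] a yc by (simp add: nat_pow_pow)
  have "g \<otimes> (h \<otimes> z \<otimes> inv h) \<otimes> inv g = y [^] (a * (b * n))"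
    using e1 conj_pow[OF g yc, of "b * n"] a yc by (simp add: nat_pow_pow)
  moreover have "h \<otimes> (g \<otimes> z \<otimes> inv g) \<otimes> inv h = y [^] (b * (a * n))"
    using e2 conj_pow[OF h yc, of "a * n"] b yc by (simp add: nat_pow_pow)
  moreover have "a * (b * n) = b * (a * n)" by simp
  ultimately show ?thesis by simp
qed

lemma comm_central:
  assumes g: "g \<in> carrier G" and h: "h \<in> carrier G" and z: "z \<in> P"
  shows "(g \<otimes> h \<otimes> inv g \<otimes> inv h) \<otimes> z = z \<otimes> (g \<otimes> h \<otimes> inv g \<otimes> inv h)"
proof -
  have zc: "z \<in> carrier G" using z Pc by blast
  define w where "w = inv h \<otimes> z \<otimes> h"
  have wP: "w \<in> P" unfolding w_def using normal.inv_op_closed1[OF PN h z] .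
  have wc: "w \<in> carrier G" using wP Pc by blast
  have hw: "h \<otimes> w \<otimes> inv h = z" unfolding w_def using h zc by (simp add: gsimps)
  let ?c = "g \<otimes> h \<otimes> inv g \<otimes> inv h"
  have cc: "?c \<in> carrier G" using g h by simp
  have "?c \<otimes> z \<otimes> inv ?c = g \<otimes> (h \<otimes> (inv g \<otimes> w \<otimes> inv (inv g)) \<otimes> inv h) \<otimes> inv g"
    unfolding w_def using g h zc by (simp add: gsimps)
  also have "\<dots> = g \<otimes> (inv g \<otimes> (h \<otimes> w \<otimes> inv h) \<otimes> inv (inv g)) \<otimes> inv g"
    using conj_commute[OF h inv_closed[OF g] wP] by simp
  also have "\<dots> = z" using hw g zc by (simp add: gsimps)
  finally have "?c \<otimes> z \<otimes> inv ?c = z" .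
  then show ?thesis using conj_fix_iff[OF cc zc] by blast
qed

lemma derived_cent:
  assumes w: "w \<in> derived G (carrier G)" and z: "z \<in> P"
  shows "w \<otimes> z = z \<otimes> w"
proof (rule comm_generate[OF derived_set_in_carrier[OF subset_refl] Pc _ _ z])
  show "w \<in> generate G (derived_set G (carrier G))" using w unfolding derived_def .
  fix s a assume s: "s \<in> derived_set G (carrier G)" and a: "a \<in> P"
  then obtain g h where gh: "g \<in> carrier G" "h \<in> carrier G" "s = g \<otimes> h \<otimes> inv g \<otimes> inv h" by blast
  show "s \<otimes> a = a \<otimes> s" using comm_central[OF gh(1,2) a] gh(3) by simp
qed

lemma Qder_cyc: "\<exists>c\<in>Q. derived G Q = generate G {c}"
proof -
  interpret H: group "G\<lparr>carrier := Q\<rparr>" by (rule subgroup_imp_group[OF Qs])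
  have "order (G\<lparr>carrier := Q\<rparr>) = 16" by (simp add: order_def cQ)
  then obtain c where c: "c \<in> Q" and e: "derived (G\<lparr>carrier := Q\<rparr>) Q = generate (G\<lparr>carrier := Q\<rparr>) {c}"
    using H.derived16 by auto
  have "derived (G\<lparr>carrier := Q\<rparr>) Q = derived G Q" by (rule derived_consistent[OF subset_refl Qs])
  moreover have "generate (G\<lparr>carrier := Q\<rparr>) {c} = generate G {c}" by (rule generate_consistent) (use c Qs in auto)
  ultimately show ?thesis using e c by auto
qed

end
context g16p begin

lemma P_central_triv:
  assumes triv: "\<forall>x\<in>Q. \<forall>z\<in>P. x \<otimes> z \<otimes> inv x = z" and x: "x \<in> P" and g: "g \<in> carrier G"
  shows "x \<otimes> g = g \<otimes> x"
proof -
  obtain q x' where q: "q \<in> Q" "x' \<in> P" "g = q \<otimes> x'" using decomp[OF g] by blast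
  have c: "q \<in> carrier G" "x' \<in> carrier G" "x \<in> carrier G" using q x Qc Pc by auto
  have e1: "q \<otimes> x = x \<otimes> q" using conj_fix_iff[OF c(1) c(3)] triv q(1) x by blast
  have e2: "x \<otimes> x' = x' \<otimes> x" by (rule Pcomm[OF x q(2)])
  have "x \<otimes> g = (x \<otimes> q) \<otimes> x'" using q(3) c by (simp add: m_assoc)
  also have "\<dots> = (q \<otimes> x) \<otimes> x'" by (simp only: e1)
  also have "\<dots> = q \<otimes> (x \<otimes> x')" using c by (simp add: m_assoc)
  also have "\<dots> = q \<otimes> (x' \<otimes> x)" by (simp only: e2)
  also have "\<dots> = g \<otimes> x" using q(3) c by (simp add: m_assoc)
  finally show ?thesis .
qed

lemma comm_central_elems:
  assumes a: "a \<in> carrier G" and b: "b \<in> carrier G" and x1: "x1 \<in> carrier G" and x2: "x2 \<in> carrier G"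
    and c1: "\<And>g. g \<in> carrier G \<Longrightarrow> x1 \<otimes> g = g \<otimes> x1"
    and c2: "\<And>g. g \<in> carrier G \<Longrightarrow> x2 \<otimes> g = g \<otimes> x2"
  shows "(a \<otimes> x1) \<otimes> (b \<otimes> x2) \<otimes> inv (a \<otimes> x1) \<otimes> inv (b \<otimes> x2) = a \<otimes> b \<otimes> inv a \<otimes> inv b"
proof -
  have i1: "inv x1 \<otimes> g = g \<otimes> inv x1" if "g \<in> carrier G" for g
    using comm_inv_l[OF x1 that c1[OF that]] .
  have i2: "inv x2 \<otimes> g = g \<otimes> inv x2" if "g \<in> carrier G" for g
    using comm_inv_l[OF x2 that c2[OF that]] .
  let ?r = "b \<otimes> (x2 \<otimes> (inv x1 \<otimes> (inv a \<otimes> (inv x2 \<otimes> inv b))))"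
  have "(a \<otimes> x1) \<otimes> (b \<otimes> x2) \<otimes> inv (a \<otimes> x1) \<otimes> inv (b \<otimes> x2) = a \<otimes> (x1 \<otimes> ?r)"
    using a b x1 x2 by (simp add: gsimps)
  also have "x1 \<otimes> ?r = ?r \<otimes> x1" using c1 a b x1 x2 by simp
  also have "?r = b \<otimes> (inv x1 \<otimes> (x2 \<otimes> (inv a \<otimes> (inv x2 \<otimes> inv b))))"
  proof -
    have "x2 \<otimes> (inv x1 \<otimes> (inv a \<otimes> (inv x2 \<otimes> inv b))) = (inv x1 \<otimes> (inv a \<otimes> (inv x2 \<otimes> inv b))) \<otimes> x2"
      using c2 a b x1 x2 by simp
    also have "\<dots> = inv x1 \<otimes> ((inv a \<otimes> (inv x2 \<otimes> inv b)) \<otimes> x2)" using a b x1 x2 by (simp add: m_assoc)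
    also have "(inv a \<otimes> (inv x2 \<otimes> inv b)) \<otimes> x2 = x2 \<otimes> (inv a \<otimes> (inv x2 \<otimes> inv b))"
      using c2 a b x1 x2 by simp
    finally show ?thesis by simp
  qed
  also have "b \<otimes> (inv x1 \<otimes> (x2 \<otimes> (inv a \<otimes> (inv x2 \<otimes> inv b)))) \<otimes> x1
      = b \<otimes> (inv x1 \<otimes> (x2 \<otimes> (inv x2 \<otimes> (inv a \<otimes> inv b)))) \<otimes> x1"
  proof -
    have "inv a \<otimes> (inv x2 \<otimes> inv b) = (inv a \<otimes> inv x2) \<otimes> inv b" using a b x2 by (simp add: m_assoc)
    also have "inv a \<otimes> inv x2 = inv x2 \<otimes> inv a" using i2[of "inv a"] a by simp
    finally have "inv a \<otimes> (inv x2 \<otimes> inv b) = inv x2 \<otimes> (inv a \<otimes> inv b)" using a b x2 by (simp add: m_assoc)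
    then show ?thesis by simp
  qed
  also have "b \<otimes> (inv x1 \<otimes> (x2 \<otimes> (inv x2 \<otimes> (inv a \<otimes> inv b)))) \<otimes> x1 = b \<otimes> (inv x1 \<otimes> (inv a \<otimes> inv b)) \<otimes> x1"
    using a b x2 x1 by (simp add: gsimps)
  also have "inv x1 \<otimes> (inv a \<otimes> inv b) = (inv a \<otimes> inv b) \<otimes> inv x1" using i1[of "inv a \<otimes> inv b"] a b by simp
  also have "a \<otimes> (b \<otimes> (inv a \<otimes> inv b \<otimes> inv x1) \<otimes> x1) = a \<otimes> b \<otimes> inv a \<otimes> inv b"
    using a b x1 by (simp add: gsimps)
  finally show ?thesis .
qed

theorem main:
  shows "internal_semidirect G Q P
    \<and> (\<not> (cyclic_group (subgroup_generated G (derived G (carrier G)))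
            \<and> (\<exists>q k. Factorial_Ring.prime (q::nat) \<and> card (derived G (carrier G)) = q ^ k))
       \<longrightarrow> (\<exists>x\<in>Q. \<exists>y\<in>Q. x \<otimes> y \<noteq> y \<otimes> x)
         \<and> (\<exists>x\<in>Q. \<exists>y\<in>P. x \<otimes> y \<otimes> inv x \<noteq> y)
         \<and> internal_direct G (derived G (carrier G)) (derived G Q) P
         \<and> cyclic_group (subgroup_generated G (derived G (carrier G))))"
proof (intro conjI impI)
  show "internal_semidirect G Q P"
    unfolding internal_semidirect_def using PN Qs QP_mult QP_inter by simp
  let ?D = "derived G (carrier G)"
  let ?Q' = "derived G Q"
  assume H: "\<not> (cyclic_group (subgroup_generated G ?D) \<and> (\<exists>q k. Factorial_Ring.prime (q::nat) \<and> card ?D = q ^ k))"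
  obtain c where cQ': "c \<in> Q" and Qgen: "?Q' = generate G {c}" using Qder_cyc by blast
  have cc: "c \<in> carrier G" using cQ' Qc by blast
  have c16: "c [^] (16::nat) = \<one>" using pow_card_sub[OF fin Qs cQ'] cQ by simp
  obtain y where yP: "y \<in> P" and y1: "y \<noteq> \<one>" using Pex by blast
  have yc: "y \<in> carrier G" using yP Pc by blast
  have Pgy: "P = generate G {y}" using Pgen[OF yP y1] by simp
  have Ds: "subgroup ?D G" by (rule derived_is_subgroup) simp
  have Q's: "subgroup ?Q' G" by (rule derived_is_subgroup[OF Qc])
  have Q'D: "?Q' \<subseteq> ?D" by (rule mono_derived[OF Qc])
  have Q'Q: "?Q' \<subseteq> Q" by (rule derived_incl[OF subset_refl Qs])
  have cardQ': "\<exists>k. card ?Q' = 2 ^ k"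
  proof -
    have "ord c dvd 2 ^ 4" using c16 pow_eq_id[OF cc] by simp
    then obtain i where "ord c = 2 ^ i" using divides_primepow_nat[of 2 "ord c" 4] by auto
    then show ?thesis using Qgen generate_pow_card[OF cc] by auto
  qed
  have act: "\<exists>x\<in>Q. \<exists>z\<in>P. x \<otimes> z \<otimes> inv x \<noteq> z"
  proof (rule ccontr)
    assume "\<not> (\<exists>x\<in>Q. \<exists>z\<in>P. x \<otimes> z \<otimes> inv x \<noteq> z)"
    then have triv: "\<forall>x\<in>Q. \<forall>z\<in>P. x \<otimes> z \<otimes> inv x = z" by blast
    have "derived_set G (carrier G) \<subseteq> derived_set G Q"
    proof
      fix s assume "s \<in> derived_set G (carrier G)"
      then obtain u v where uv: "u \<in> carrier G" "v \<in> carrier G" "s = u \<otimes> v \<otimes> inv u \<otimes> inv v" by blast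
      obtain q1 x1 where 1: "q1 \<in> Q" "x1 \<in> P" "u = q1 \<otimes> x1" using decomp[OF uv(1)] by blast
      obtain q2 x2 where 2: "q2 \<in> Q" "x2 \<in> P" "v = q2 \<otimes> x2" using decomp[OF uv(2)] by blast
      have "s = q1 \<otimes> q2 \<otimes> inv q1 \<otimes> inv q2"
        using comm_central_elems[OF Qmem[OF 1(1)] Qmem[OF 2(1)] Pmem[OF 1(2)] Pmem[OF 2(2)]
            P_central_triv[OF triv 1(2)] P_central_triv[OF triv 2(2)]] uv(3) 1(3) 2(3) by simp
      then show "s \<in> derived_set G Q" using 1(1) 2(1) by blast
    qed
    then have "?D \<subseteq> ?Q'" unfolding derived_def by (rule mono_generate)
    then have DQ: "?D = ?Q'" using Q'D by blast
    have "cyclic_group (subgroup_generated G ?D)" using DQ Qgen cyclic_generate[OF cc] by simp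
    moreover have "\<exists>q k. Factorial_Ring.prime (q::nat) \<and> card ?D = q ^ k"
    proof -
      obtain k where kk: "card ?Q' = 2 ^ k" using cardQ' by blast
      have p2': "Factorial_Ring.prime (2::nat)" by simp
      show ?thesis by (rule exI[of _ 2], rule exI[of _ k]) (use DQ p2' kk in simp)
    qed
    ultimately show False using H by blast
  qed
  then show "\<exists>x\<in>Q. \<exists>y\<in>P. x \<otimes> y \<otimes> inv x \<noteq> y" by blast
  obtain x z where xQ: "x \<in> Q" and zP: "z \<in> P" and xz: "x \<otimes> z \<otimes> inv x \<noteq> z" using act by blast
  have xc: "x \<in> carrier G" using xQ Qc by blast
  have zc: "z \<in> carrier G" using zP Pc by blast
  define w where "w = x \<otimes> z \<otimes> inv x \<otimes> inv z"
  have wP: "w \<in> P" unfolding w_def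
    using subgroup.m_closed[OF Ps normal.inv_op_closed2[OF PN xc zP] subgroup.m_inv_closed[OF Ps zP]] .
  have w1: "w \<noteq> \<one>"
  proof
    assume "w = \<one>"
    have "x \<otimes> z \<otimes> inv x = w \<otimes> z" unfolding w_def using xc zc by (simp add: gsimps)
    also have "\<dots> = z" using \<open>w = \<one>\<close> zc by simp
    finally show False using xz by simp
  qed
  have wD: "w \<in> ?D" unfolding w_def derived_def using xc zc by (intro generate.incl) blast
  have PD: "P \<subseteq> ?D" using Pgen[OF wP w1] generate_subgroup_incl[OF _ Ds] wD by blast
  have DQP: "?D = ?Q' <#> P"
  proof
    show "?D \<subseteq> ?Q' <#> P" by (rule derived_sub)
    show "?Q' <#> P \<subseteq> ?D"
    proof
      fix g assume "g \<in> ?Q' <#> P"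
      then obtain a b where ab: "a \<in> ?Q'" "b \<in> P" "g = a \<otimes> b" unfolding set_mult_def by blast
      then show "g \<in> ?D" using subgroup.m_closed[OF Ds] Q'D PD by blast
    qed
  qed
  show "\<exists>x\<in>Q. \<exists>y\<in>Q. x \<otimes> y \<noteq> y \<otimes> x"
  proof (rule ccontr)
    assume "\<not> (\<exists>x\<in>Q. \<exists>y\<in>Q. x \<otimes> y \<noteq> y \<otimes> x)"
    then have ab: "\<forall>x\<in>Q. \<forall>y\<in>Q. x \<otimes> y = y \<otimes> x" by blast
    have "derived_set G Q \<subseteq> {\<one>}"
    proof
      fix s assume "s \<in> derived_set G Q"
      then obtain u v where uv: "u \<in> Q" "v \<in> Q" "s = u \<otimes> v \<otimes> inv u \<otimes> inv v" by blast
      have e: "u \<otimes> v = v \<otimes> u" using ab uv(1,2) by blast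
      have "s = v \<otimes> u \<otimes> inv u \<otimes> inv v" using uv(3) e by simp
      also have "\<dots> = \<one>" using Qmem[OF uv(1)] Qmem[OF uv(2)] by (simp add: gsimps)
      finally show "s \<in> {\<one>}" by simp
    qed
    then have "?Q' \<subseteq> {\<one>}" unfolding derived_def by (rule generate_subgroup_incl[OF _ triv_subgroup])
    then have Q1: "?Q' \<subseteq> {\<one>}" .
    have "?D \<subseteq> P"
    proof
      fix g assume "g \<in> ?D"
      then have "g \<in> ?Q' <#> P" using DQP by simp
      then obtain a b where ab: "a \<in> ?Q'" "b \<in> P" "g = a \<otimes> b" unfolding set_mult_def by blast
      then have "a = \<one>" using Q1 by blast
      then show "g \<in> P" using ab Pc by auto
    qed
    then have DP: "?D = P" using PD by blast
    have "cyclic_group (subgroup_generated G ?D)" using DP Pgy cyclic_generate[OF yc] by simp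
    moreover have "card ?D = p ^ 1" using DP cP by simp
    ultimately show False using H pp by blast
  qed
  have inter: "?Q' \<inter> P = {\<one>}"
    using Q'Q QP_inter subgroup.one_closed[OF Q's] subgroup.one_closed[OF Ps] by blast
  show "internal_direct G ?D ?Q' P"
    unfolding internal_direct_def
  proof (intro conjI)
    show "subgroup ?Q' G" by (rule Q's)
    show "subgroup P G" by (rule Ps)
    show "?Q' <#> P = ?D" using DQP by simp
    show "?Q' \<inter> P = {\<one>}" by (rule inter)
    show "\<forall>a\<in>?Q'. \<forall>b\<in>P. a \<otimes> b = b \<otimes> a" using derived_cent Q'D by blast
  qed
  have cD: "c \<in> ?D" using Q'D Qgen generate.incl[of c "{c}" G] by blast
  have cy: "c \<otimes> y = y \<otimes> c" using derived_cent[OF cD yP] .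
  let ?g = "c \<otimes> y"
  have gc: "?g \<in> carrier G" using cc yc by simp
  have gs: "subgroup (generate G {?g}) G" by (rule generate_is_subgroup) (use gc in simp)
  have gin: "?g \<in> generate G {?g}" by (rule generate.incl) simp
  have "?g [^] (p ^ 4) = c [^] (p ^ 4) \<otimes> y [^] (p ^ 4)" by (rule pow_mult_distrib[OF cy cc yc])
  moreover have "c [^] (p ^ 4) = c"
    using pow_mod_eq[OF cc c16, of "p ^ 4"] odd_pow4[OF po] cc by simp
  moreover have "y [^] (p ^ 4) = \<one>"
  proof -
    have "y [^] (p ^ 4) = (y [^] p) [^] (p ^ 3)" using yc by (simp add: nat_pow_pow power_Suc[symmetric] numeral_eq_Suc)
    then show ?thesis using ypow[OF yP] by simp
  qed
  ultimately have "?g [^] (p ^ 4) = c" using cc by simp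
  then have cg: "c \<in> generate G {?g}" using sub_nat_pow[OF gs gin, of "p ^ 4"] by simp
  have "y = inv c \<otimes> ?g" using cc yc by (simp add: gsimps)
  then have yg: "y \<in> generate G {?g}"
    using subgroup.m_closed[OF gs subgroup.m_inv_closed[OF gs cg] gin] by simp
  have Q'g: "?Q' \<subseteq> generate G {?g}" using Qgen generate_subgroup_incl[OF _ gs] cg by simp
  have Pg: "P \<subseteq> generate G {?g}" using Pgy generate_subgroup_incl[OF _ gs] yg by simp
  have "?D \<subseteq> generate G {?g}"
  proof
    fix g assume "g \<in> ?D"
    then have "g \<in> ?Q' <#> P" using DQP by simp
    then obtain a b where ab: "a \<in> ?Q'" "b \<in> P" "g = a \<otimes> b" unfolding set_mult_def by blast
    then show "g \<in> generate G {?g}" using subgroup.m_closed[OF gs] Q'g Pg by blast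
  qed
  moreover have "generate G {?g} \<subseteq> ?D"
  proof (rule generate_subgroup_incl[OF _ Ds])
    show "{?g} \<subseteq> ?D" using subgroup.m_closed[OF Ds cD] PD yP by blast
  qed
  ultimately have "?D = generate G {?g}" by blast
  then show "cyclic_group (subgroup_generated G ?D)" using cyclic_generate[OF gc] by simp
qed

end

theorem mainTheorem11:
  fixes G (structure) and p :: nat and P Q :: "'a set"
  assumes "group G" and "finite (carrier G)"
    and "Factorial_Ring.prime p" and "odd p" and "order G = 16 * p"
    and "sylow_subgroup G p P" and "P \<lhd> G"
    and "sylow_subgroup G 2 Q"
  shows "internal_semidirect G Q P
    \<and> (\<not> (cyclic_group (subgroup_generated G (derived G (carrier G)))
            \<and> (\<exists>q k. Factorial_Ring.prime (q::nat) \<and> card (derived G (carrier G)) = q ^ k))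
       \<longrightarrow> (\<exists>x\<in>Q. \<exists>y\<in>Q. x \<otimes> y \<noteq> y \<otimes> x)
         \<and> (\<exists>x\<in>Q. \<exists>y\<in>P. x \<otimes> y \<otimes> inv x \<noteq> y)
         \<and> internal_direct G (derived G (carrier G)) (derived G Q) P
         \<and> cyclic_group (subgroup_generated G (derived G (carrier G))))"
proof -
  have cP: "card P = p"
    using assms(6) mult16[OF assms(3,4)] assms(5) unfolding sylow_subgroup_def by simp
  have cQ: "card Q = 16"
    using assms(8) mult2[OF assms(3,4)] assms(5) unfolding sylow_subgroup_def by simp
  have Qs: "subgroup Q G" using assms(8) unfolding sylow_subgroup_def by simp
  have ax: "g16p_axioms G p P Q" by (rule g16p_axioms.intro) (use assms cP cQ Qs in auto)
  interpret g16p G p P Q by (rule g16p.intro[OF assms(1) ax])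
  show ?thesis by (rule main)
qed

end
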